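(* Let $a,b,c,d>0$ and, on $\mathbb R^2$, let $G_B(0)=0$ and $G_B(u)=\frac{1}{|u|}\big((au_1^2+bu_2^2)u_1,\ (cu_1^2+du_2^2)u_2\big)$ for $u\ne0$. For $w\in\mathbb R^2$ set $|w|_1=(aw_1^2+bw_2^2)^{1/2}$, $|w|_2=(cw_1^2+dw_2^2)^{1/2}$. (i) If either $$\Big[b+c-\tfrac{(|w|_1+|w|_2)^2}{2}\Big]^2\le 4ad\ \text{ for all } w\in\mathbb R^2,\ |w|=1,$$ or $$\Big[b+c-\tfrac{(|w|_1-|w|_2)^2}{2}\Big]^2\le 4ad\ \text{ for all } w\in\mathbb R^2,\ |w|=1,$$ then $G_B$ is monotone. (ii) If either of these two conditions holds with strict inequality for all unit $w$, then $G_B$ is $3$-monotone.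
   Context: A map $F:\mathbb R^n\to\mathbb R^n$ is monotone if $(F(u)-F(v))\cdot(u-v)\ge0$ for all $u,v$; for $\alpha>0$ it is $\alpha$-monotone if there is $C>0$ with $(F(u)-F(v))\cdot(u-v)\ge C|u-v|^\alpha$ for all $u,v\in\mathbb R^n$. $|\cdot|$ is the Euclidean norm. *)

theory Defs
  imports "HOL-Analysis.Analysis"
begin

definition monotone_map :: "('a::real_inner \<Rightarrow> 'a) \<Rightarrow> bool" where
  "monotone_map F \<longleftrightarrow> (\<forall>u v. (F u - F v) \<bullet> (u - v) \<ge> 0)"

definition alpha_monotone :: "real \<Rightarrow> ('a::real_inner \<Rightarrow> 'a) \<Rightarrow> bool" where
  "alpha_monotone \<alpha> F \<longleftrightarrow>
     (\<exists>C>0. \<forall>u v. (F u - F v) \<bullet> (u - v) \<ge> C * norm (u - v) powr \<alpha>)"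

definition G_B :: "real \<Rightarrow> real \<Rightarrow> real \<Rightarrow> real \<Rightarrow> real^2 \<Rightarrow> real^2" where
  "G_B a b c d u =
     (if u = 0 then 0
      else (1 / norm u) *\<^sub>R
        (vector [(a * (u$1)^2 + b * (u$2)^2) * u$1,
                 (c * (u$1)^2 + d * (u$2)^2) * u$2] :: real^2))"

definition norm1 :: "real \<Rightarrow> real \<Rightarrow> real^2 \<Rightarrow> real" where
  "norm1 a b w = sqrt (a * (w$1)^2 + b * (w$2)^2)"

definition norm2 :: "real \<Rightarrow> real \<Rightarrow> real^2 \<Rightarrow> real" where
  "norm2 c d w = sqrt (c * (w$1)^2 + d * (w$2)^2)"

end

theory Submission
  imports Defs
begin

definition QF :: "real\<Rightarrow>real\<Rightarrow>real\<Rightarrow>real\<Rightarrow>real\<Rightarrow>real\<Rightarrow>real\<Rightarrow>real\<Rightarrow>real" where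
"QF a b c d x1 x2 h1 h2 = (x2^2*(a*x1^2+b*x2^2) + 2*a*x1^2*(x1^2+x2^2))*h1^2
  + x1*x2*(2*(b+c)*(x1^2+x2^2) - (a*x1^2+b*x2^2) - (c*x1^2+d*x2^2))*h1*h2
  + (x1^2*(c*x1^2+d*x2^2) + 2*d*x2^2*(x1^2+x2^2))*h2^2"

lemma QF_hom: "QF a b c d (r*w1) (r*w2) h1 h2 = r^4 * QF a b c d w1 w2 h1 h2"
  unfolding QF_def by algebra

lemma quad_nonneg:
  fixes A B k h1 h2 :: real
  assumes "A > 0" "A*B - k^2 \<ge> 0"
  shows "A*h1^2 + 2*k*h1*h2 + B*h2^2 \<ge> 0"
proof -
  have "A*(A*h1^2 + 2*k*h1*h2 + B*h2^2) = (A*h1+k*h2)^2 + (A*B-k^2)*h2^2"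
    by algebra
  also have "\<dots> \<ge> 0" using assms by simp
  finally show ?thesis using assms(1) by (simp add: zero_le_mult_iff)
qed

lemma quad_sos:
  fixes A B k h1 h2 :: real
  shows "(A+B)*(A*h1^2 + 2*k*h1*h2 + B*h2^2) = (A*B-k^2)*(h1^2+h2^2) + (A*h1+k*h2)^2 + (k*h1+B*h2)^2"
  by algebra

definition AA :: "real\<Rightarrow>real\<Rightarrow>real\<Rightarrow>real\<Rightarrow>real" where "AA a b w1 w2 = w2^2*(a*w1^2+b*w2^2) + 2*a*w1^2"
definition BB :: "real\<Rightarrow>real\<Rightarrow>real\<Rightarrow>real\<Rightarrow>real" where "BB c d w1 w2 = w1^2*(c*w1^2+d*w2^2) + 2*d*w2^2"
definition KK :: "real\<Rightarrow>real\<Rightarrow>real\<Rightarrow>real\<Rightarrow>real\<Rightarrow>real\<Rightarrow>real" where "KK a b c d w1 w2 = w1*w2*(b+c - ((a*w1^2+b*w2^2)+(c*w1^2+d*w2^2))/2)"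

lemma QF_unit:
  assumes "w1^2+w2^2 = 1"
  shows "QF a b c d w1 w2 h1 h2 = AA a b w1 w2*h1^2 + 2*KK a b c d w1 w2*h1*h2 + BB c d w1 w2*h2^2"
  using assms unfolding QF_def AA_def BB_def KK_def by (simp add: algebra_simps)

lemma core:
  fixes a b c d w1 w2 :: real
  assumes pos: "a>0" "b>0" "c>0" "d>0" and w: "w1^2+w2^2 = 1"
  and cond: "(b + c - (sqrt(a*w1^2+b*w2^2) + sqrt(c*w1^2+d*w2^2))^2/2)^2 \<le> 4*a*d
          \<or> (b + c - (sqrt(a*w1^2+b*w2^2) - sqrt(c*w1^2+d*w2^2))^2/2)^2 \<le> 4*a*d"
  shows "AA a b w1 w2 * BB c d w1 w2 - (KK a b c d w1 w2)^2 \<ge>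
     w1^2*w2^2*((2* sqrt a* sqrt d + sqrt(a*w1^2+b*w2^2)* sqrt(c*w1^2+d*w2^2))^2 - (b+c-((a*w1^2+b*w2^2)+(c*w1^2+d*w2^2))/2)^2)"
    and "\<bar>b+c-((a*w1^2+b*w2^2)+(c*w1^2+d*w2^2))/2\<bar> \<le> 2* sqrt a* sqrt d + sqrt(a*w1^2+b*w2^2)* sqrt(c*w1^2+d*w2^2)"
proof -
  define X where "X = sqrt(a*w1^2+b*w2^2)"
  define Y where "Y = sqrt(c*w1^2+d*w2^2)"
  define p where "p = sqrt a"
  define q where "q = sqrt d"
  define K where "K = b+c-((a*w1^2+b*w2^2)+(c*w1^2+d*w2^2))/2"
  have X2: "X^2 = a*w1^2+b*w2^2" unfolding X_def using pos by (simp add: add_nonneg_nonneg)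
  have Y2: "Y^2 = c*w1^2+d*w2^2" unfolding Y_def using pos by (simp add: add_nonneg_nonneg)
  have p2: "p^2 = a" "p \<ge> 0" unfolding p_def using pos by auto
  have q2: "q^2 = d" "q \<ge> 0" unfolding q_def using pos by auto
  have XY: "X*Y \<ge> 0" unfolding X_def Y_def using pos by (simp add: add_nonneg_nonneg)
  have ad: "4*a*d = (2*p*q)^2" using p2 q2 by (simp add: power_mult_distrib)
  have KX: "K = b + c - (X^2+Y^2)/2" unfolding K_def X2 Y2 ..
  have e1: "b + c - (X+Y)^2/2 = K - X*Y" unfolding KX by (simp add: power2_eq_square field_simps)
  have e2: "b + c - (X-Y)^2/2 = K + X*Y" unfolding KX by (simp add: power2_eq_square field_simps)
  have c1: "(K - X*Y)^2 \<le> (2*p*q)^2 \<or> (K + X*Y)^2 \<le> (2*p*q)^2"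
    using cond unfolding ad X_def[symmetric] Y_def[symmetric] e1 e2 .
  have pq: "2*p*q \<ge> 0" using p2 q2 by simp
  have absK: "\<bar>K\<bar> \<le> 2*p*q + X*Y"
    using c1 proof
    assume "(K - X*Y)^2 \<le> (2*p*q)^2"
    hence "\<bar>K - X*Y\<bar> \<le> 2*p*q" using pq by (metis abs_le_square_iff abs_of_nonneg)
    thus ?thesis using XY by linarith
  next
    assume "(K + X*Y)^2 \<le> (2*p*q)^2"
    hence "\<bar>K + X*Y\<bar> \<le> 2*p*q" using pq by (metis abs_le_square_iff abs_of_nonneg)
    thus ?thesis using XY by linarith
  qed
  show "\<bar>b+c-((a*w1^2+b*w2^2)+(c*w1^2+d*w2^2))/2\<bar> \<le> 2* sqrt a* sqrt d + sqrt(a*w1^2+b*w2^2)* sqrt(c*w1^2+d*w2^2)"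
    using absK unfolding K_def X_def Y_def p_def q_def .
  have eq: "AA a b w1 w2 * BB c d w1 w2 - (KK a b c d w1 w2)^2
     = w1^2*w2^2*((2*p*q + X*Y)^2 - K^2) + 2*(q*w2^2*X - p*w1^2*Y)^2"
  proof -
    have "AA a b w1 w2 = w2^2*X^2 + 2*p^2*w1^2" unfolding AA_def X2 p2 ..
    moreover have "BB c d w1 w2 = w1^2*Y^2 + 2*q^2*w2^2" unfolding BB_def Y2 q2 ..
    moreover have "KK a b c d w1 w2 = w1*w2*K" unfolding KK_def K_def ..
    moreover have "w1^2*w2^2 = w1^2*w2^2*(w1^2+w2^2)^2" using w by simp
    ultimately show ?thesis by (simp add: algebra_simps power2_eq_square)
  qed
  show "AA a b w1 w2 * BB c d w1 w2 - (KK a b c d w1 w2)^2 \<ge>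
     w1^2*w2^2*((2* sqrt a* sqrt d + sqrt(a*w1^2+b*w2^2)* sqrt(c*w1^2+d*w2^2))^2 - (b+c-((a*w1^2+b*w2^2)+(c*w1^2+d*w2^2))/2)^2)"
    unfolding eq K_def[symmetric] X_def[symmetric] Y_def[symmetric] p_def[symmetric] q_def[symmetric]
    by simp
qed

definition PP :: "real\<Rightarrow>real\<Rightarrow>real\<Rightarrow>real\<Rightarrow>real\<Rightarrow>real\<Rightarrow>real\<Rightarrow>real\<Rightarrow>real" where
"PP a b c d x1 x2 h1 h2 = (a*x1^2+b*x2^2)*x1*h1 + (c*x1^2+d*x2^2)*x2*h2"

lemma phi_deriv:
  fixes v1 v2 h1 h2 t :: real
  defines "x1 \<equiv> v1 + t*h1" and "x2 \<equiv> v2 + t*h2"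
  assumes S: "x1^2 + x2^2 > 0"
  shows "((\<lambda>t. PP a b c d (v1+t*h1) (v2+t*h2) h1 h2 / sqrt ((v1+t*h1)^2 + (v2+t*h2)^2))
     has_real_derivative QF a b c d x1 x2 h1 h2 / sqrt (x1^2+x2^2) ^ 3) (at t)"
proof -
  define Pp where "Pp = (3*a*x1^2*h1+b*x2^2*h1+2*b*x1*x2*h2)*h1+(2*c*x1*x2*h1+c*x1^2*h2+3*d*x2^2*h2)*h2"
  define Sp where "Sp = 2*(x1*h1+x2*h2)"
  have dP: "((\<lambda>t. PP a b c d (v1+t*h1) (v2+t*h2) h1 h2) has_real_derivative Pp) (at t)"
    unfolding PP_def
    apply (rule derivative_eq_intros refl)+
    unfolding Pp_def x1_def x2_def by (simp add: algebra_simps power2_eq_square)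
  have dS: "((\<lambda>t. (v1+t*h1)^2 + (v2+t*h2)^2) has_real_derivative Sp) (at t)"
    apply (rule derivative_eq_intros refl)+
    unfolding Sp_def x1_def x2_def by (simp add: algebra_simps)
  have dR: "((\<lambda>t. sqrt ((v1+t*h1)^2 + (v2+t*h2)^2)) has_real_derivative inverse (sqrt (x1^2+x2^2)) / 2 * Sp) (at t)"
    apply (rule DERIV_chain2[where f=sqrt, OF _ dS])
    using DERIV_real_sqrt[OF S] unfolding x1_def x2_def .
  define R where "R = sqrt (x1^2+x2^2)"
  have R0: "R > 0" unfolding R_def using S by simp
  have R2: "R^2 = x1^2+x2^2" unfolding R_def using S by simp
  have dq: "((\<lambda>t. PP a b c d (v1+t*h1) (v2+t*h2) h1 h2 / sqrt ((v1+t*h1)^2 + (v2+t*h2)^2))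
     has_real_derivative (Pp * R - (inverse R / 2 * Sp) * PP a b c d x1 x2 h1 h2) / R ^ Suc (Suc 0)) (at t)"
    unfolding R_def x1_def x2_def
    by (rule DERIV_quotient[OF dP dR, unfolded x1_def x2_def]) (use S in \<open>unfold x1_def x2_def, auto\<close>)
  have alg: "Pp * (x1^2+x2^2) - PP a b c d x1 x2 h1 h2 * Sp / 2 = QF a b c d x1 x2 h1 h2"
    unfolding Pp_def Sp_def PP_def QF_def by (simp add: algebra_simps power2_eq_square)
  have "(Pp * R - (inverse R / 2 * Sp) * PP a b c d x1 x2 h1 h2) / R ^ Suc (Suc 0) = QF a b c d x1 x2 h1 h2 / R^3"
  proof -
    have "(Pp * R - (inverse R / 2 * Sp) * PP a b c d x1 x2 h1 h2) / R ^ Suc (Suc 0)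
       = (Pp * R^2 - PP a b c d x1 x2 h1 h2 * Sp / 2) / R^3"
      using R0 by (simp add: field_simps power2_eq_square power3_eq_cube)
    also have "\<dots> = QF a b c d x1 x2 h1 h2 / R^3" unfolding R2 alg ..
    finally show ?thesis .
  qed
  thus ?thesis using dq unfolding R_def by simp
qed

definition phi :: "real\<Rightarrow>real\<Rightarrow>real\<Rightarrow>real\<Rightarrow>real\<Rightarrow>real\<Rightarrow>real\<Rightarrow>real\<Rightarrow>real\<Rightarrow>real" where
"phi a b c d v1 v2 h1 h2 t = PP a b c d (v1+t*h1) (v2+t*h2) h1 h2 / sqrt ((v1+t*h1)^2 + (v2+t*h2)^2)"

lemma PP_bound:
  fixes x1 x2 :: real
  shows "\<bar>PP a b c d x1 x2 h1 h2\<bar> \<le> ((\<bar>a\<bar>+\<bar>b\<bar>+\<bar>c\<bar>+\<bar>d\<bar>)*(\<bar>h1\<bar>+\<bar>h2\<bar>)) * (x1^2+x2^2) * sqrt (x1^2+x2^2)"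
proof -
  define S where "S = x1^2+x2^2"
  define R where "R = sqrt S"
  have R0: "R \<ge> 0" unfolding R_def S_def by simp
  have ax1: "\<bar>x1\<bar> \<le> R" unfolding R_def S_def using real_sqrt_le_mono[of "x1^2" "x1^2+x2^2"] by simp
  have ax2: "\<bar>x2\<bar> \<le> R" unfolding R_def S_def using real_sqrt_le_mono[of "x2^2" "x1^2+x2^2"] by simp
  have n1: "\<bar>a*x1^2+b*x2^2\<bar> \<le> (\<bar>a\<bar>+\<bar>b\<bar>)*S"
  proof -
    have "\<bar>a*x1^2+b*x2^2\<bar> \<le> \<bar>a\<bar>*x1^2+\<bar>b\<bar>*x2^2" by (simp add: abs_mult abs_triangle_ineq[THEN order_trans])
    also have "\<dots> \<le> (\<bar>a\<bar>+\<bar>b\<bar>)*S" unfolding S_def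
      by (simp add: algebra_simps add_mono mult_left_mono)
    finally show ?thesis .
  qed
  have n2: "\<bar>c*x1^2+d*x2^2\<bar> \<le> (\<bar>c\<bar>+\<bar>d\<bar>)*S"
  proof -
    have "\<bar>c*x1^2+d*x2^2\<bar> \<le> \<bar>c\<bar>*x1^2+\<bar>d\<bar>*x2^2" by (simp add: abs_mult abs_triangle_ineq[THEN order_trans])
    also have "\<dots> \<le> (\<bar>c\<bar>+\<bar>d\<bar>)*S" unfolding S_def
      by (simp add: algebra_simps add_mono mult_left_mono)
    finally show ?thesis .
  qed
  have t1: "\<bar>(a*x1^2+b*x2^2)*x1*h1\<bar> \<le> ((\<bar>a\<bar>+\<bar>b\<bar>)*S) * (R*\<bar>h1\<bar>)"
    unfolding abs_mult mult.assoc[symmetric]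
    by (metis abs_ge_zero ax1 mult.assoc mult_mono' n1 mult_right_mono)
  have t2: "\<bar>(c*x1^2+d*x2^2)*x2*h2\<bar> \<le> ((\<bar>c\<bar>+\<bar>d\<bar>)*S) * (R*\<bar>h2\<bar>)"
    unfolding abs_mult mult.assoc[symmetric]
    by (metis abs_ge_zero ax2 mult.assoc mult_mono' n2 mult_right_mono)
  have S0: "S \<ge> 0" unfolding S_def by simp
  have "\<bar>PP a b c d x1 x2 h1 h2\<bar> \<le> ((\<bar>a\<bar>+\<bar>b\<bar>)*S) * (R*\<bar>h1\<bar>) + ((\<bar>c\<bar>+\<bar>d\<bar>)*S) * (R*\<bar>h2\<bar>)"
    unfolding PP_def using t1 t2 abs_triangle_ineq by (smt (verit))
  also have "\<dots> \<le> ((\<bar>a\<bar>+\<bar>b\<bar>+\<bar>c\<bar>+\<bar>d\<bar>)*(\<bar>h1\<bar>+\<bar>h2\<bar>)) * S * R"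
  proof -
    have "0 \<le> S*R" using S0 R0 by simp
    hence "0 \<le> (S*R) * ((\<bar>a\<bar>+\<bar>b\<bar>)*\<bar>h2\<bar> + (\<bar>c\<bar>+\<bar>d\<bar>)*\<bar>h1\<bar>)" by simp
    thus ?thesis by (simp add: algebra_simps)
  qed
  finally show ?thesis unfolding S_def R_def .
qed

lemma phi_cont:
  shows "continuous_on A (phi a b c d v1 v2 h1 h2)"
proof -
  have "isCont (phi a b c d v1 v2 h1 h2) t" for t
  proof (cases "(v1+t*h1)^2 + (v2+t*h2)^2 > 0")
    case True
    show ?thesis unfolding phi_def[abs_def]
      by (rule DERIV_isCont[OF phi_deriv[OF True]])
  next
    case False
    hence S0: "(v1+t*h1)^2 + (v2+t*h2)^2 = 0" by (smt (verit) sum_power2_ge_zero)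
    define L where "L = (\<bar>a\<bar>+\<bar>b\<bar>+\<bar>c\<bar>+\<bar>d\<bar>)*(\<bar>h1\<bar>+\<bar>h2\<bar>)"
    have p0: "phi a b c d v1 v2 h1 h2 t = 0" unfolding phi_def S0 by simp
    have bnd: "norm (phi a b c d v1 v2 h1 h2 s) \<le> L * ((v1+s*h1)^2 + (v2+s*h2)^2)" for s
    proof (cases "(v1+s*h1)^2 + (v2+s*h2)^2 > 0")
      case True
      have "\<bar>phi a b c d v1 v2 h1 h2 s\<bar> = \<bar>PP a b c d (v1+s*h1) (v2+s*h2) h1 h2\<bar> / sqrt ((v1+s*h1)^2 + (v2+s*h2)^2)"
        unfolding phi_def by (simp add: abs_divide)
      also have "\<dots> \<le> L * ((v1+s*h1)^2 + (v2+s*h2)^2) * sqrt ((v1+s*h1)^2 + (v2+s*h2)^2) / sqrt ((v1+s*h1)^2 + (v2+s*h2)^2)"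
        using PP_bound[of a b c d "v1+s*h1" "v2+s*h2" h1 h2] True unfolding L_def
        by (intro divide_right_mono) auto
      also have "\<dots> = L * ((v1+s*h1)^2 + (v2+s*h2)^2)" using True by simp
      finally show ?thesis by simp
    next
      case False
      hence "(v1+s*h1)^2 + (v2+s*h2)^2 = 0" by (smt (verit) sum_power2_ge_zero)
      thus ?thesis unfolding phi_def by simp
    qed
    have lim: "((\<lambda>s. L * ((v1+s*h1)^2 + (v2+s*h2)^2)) \<longlongrightarrow> 0) (at t)"
    proof -
      have "((\<lambda>s. L * ((v1+s*h1)^2 + (v2+s*h2)^2)) \<longlongrightarrow> L * ((v1+t*h1)^2 + (v2+t*h2)^2)) (at t)"
        by (intro tendsto_intros)
      thus ?thesis unfolding S0 by simp
    qed
    have "(phi a b c d v1 v2 h1 h2 \<longlongrightarrow> 0) (at t)"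
      by (rule Lim_null_comparison[OF _ lim]) (rule always_eventually, use bnd in blast)
    thus ?thesis unfolding isCont_def p0 .
  qed
  thus ?thesis by (simp add: continuous_at_imp_continuous_on)
qed

lemma mono_piece:
  fixes f f' :: "real \<Rightarrow> real"
  assumes "a \<le> b" "continuous_on {a..b} f"
    "\<And>t. a < t \<Longrightarrow> t < b \<Longrightarrow> (f has_real_derivative f' t) (at t) \<and> f' t \<ge> 0"
  shows "f a \<le> f b"
  using assms by (intro DERIV_nonneg_imp_increasing_open[of a b f]) blast+

lemma path_ineq:
  fixes \<mu> v1 v2 h1 h2 :: real
  assumes mu: "\<mu> \<ge> 0"
    and H: "\<And>x1 x2 k1 k2. x1^2+x2^2 > 0 \<Longrightarrow> QF a b c d x1 x2 k1 k2 \<ge> \<mu>*(x1^2+x2^2)^2*(k1^2+k2^2)"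
  shows "phi a b c d v1 v2 h1 h2 1 - phi a b c d v1 v2 h1 h2 0 \<ge> \<mu>/4 * sqrt(h1^2+h2^2)^3"
proof (cases "h1^2+h2^2 = 0")
  case True
  hence "h1 = 0" "h2 = 0" by (auto simp: sum_power2_eq_zero_iff)
  thus ?thesis unfolding phi_def by simp
next
  case False
  define H2 where "H2 = h1^2+h2^2"
  have H2p: "H2 > 0" using False unfolding H2_def by (smt (verit) sum_power2_ge_zero)
  define nh where "nh = sqrt H2"
  have nhp: "nh > 0" unfolding nh_def using H2p by simp
  have nh2: "nh^2 = H2" unfolding nh_def using H2p by simp
  define t0 where "t0 = -(v1*h1+v2*h2)/H2"
  define S where "S t = (v1+t*h1)^2 + (v2+t*h2)^2" for t
  have Sid: "S t * H2 = H2^2*(t-t0)^2 + (v1*h2-v2*h1)^2" for t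
  proof -
    have "H2*(t-t0) = H2*t + (v1*h1+v2*h2)" unfolding t0_def using H2p by (simp add: field_simps)
    hence "H2^2*(t-t0)^2 = (H2*t + (v1*h1+v2*h2))^2" by (metis power_mult_distrib)
    thus ?thesis unfolding S_def H2_def by (simp add: algebra_simps power2_eq_square)
  qed
  have Sge: "S t \<ge> H2*(t-t0)^2" for t
  proof -
    have "S t * H2 \<ge> H2^2*(t-t0)^2" using Sid[of t] zero_le_power2[of "v1*h2-v2*h1"] by linarith
    hence "(H2*(t-t0)^2) * H2 \<le> S t * H2" by (simp add: power2_eq_square mult_ac)
    thus ?thesis using H2p by (simp add: mult_le_cancel_right_pos)
  qed
  have Spos: "S t > 0" if "t \<noteq> t0" for t
  proof -
    have "(t-t0)^2 > 0" using that by simp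
    thus ?thesis using Sge[of t] H2p by (smt (verit) mult_pos_pos)
  qed
  define E where "E = \<mu> * nh^3"
  have E0: "E \<ge> 0" unfolding E_def using mu nhp by simp
  define f where "f = phi a b c d v1 v2 h1 h2"
  have dphi: "(f has_real_derivative QF a b c d (v1+t*h1) (v2+t*h2) h1 h2 / sqrt (S t) ^ 3) (at t)
     \<and> QF a b c d (v1+t*h1) (v2+t*h2) h1 h2 / sqrt (S t) ^ 3 \<ge> E * \<bar>t - t0\<bar>" if "t \<noteq> t0" for t
  proof
    have S0: "S t > 0" using Spos that .
    show "(f has_real_derivative QF a b c d (v1+t*h1) (v2+t*h2) h1 h2 / sqrt (S t) ^ 3) (at t)"
      using phi_deriv[of v1 t h1 v2 h2 a b c d] S0 unfolding f_def phi_def[abs_def] S_def by simp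
    define R where "R = sqrt (S t)"
    have R0: "R > 0" unfolding R_def using S0 by simp
    have R2: "R^2 = S t" unfolding R_def using S0 by simp
    have "QF a b c d (v1+t*h1) (v2+t*h2) h1 h2 \<ge> \<mu> * (S t)^2 * H2"
      using H[of "v1+t*h1" "v2+t*h2" h1 h2] S0 unfolding S_def H2_def by simp
    hence "QF a b c d (v1+t*h1) (v2+t*h2) h1 h2 / R^3 \<ge> \<mu> * (S t)^2 * H2 / R^3"
      using R0 by (simp add: divide_right_mono)
    also have "\<mu> * (S t)^2 * H2 / R^3 = \<mu> * R * H2"
      using R0 unfolding R2[symmetric] by (simp add: field_simps power2_eq_square power3_eq_cube)
    also have "R \<ge> nh * \<bar>t - t0\<bar>"
    proof -
      have "sqrt (H2*(t-t0)^2) \<le> R" unfolding R_def using Sge[of t] real_sqrt_le_mono by blast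
      moreover have "sqrt (H2*(t-t0)^2) = nh * \<bar>t - t0\<bar>" unfolding nh_def by (simp add: real_sqrt_mult)
      ultimately show ?thesis by simp
    qed
    hence "\<mu> * R * H2 \<ge> \<mu> * (nh * \<bar>t - t0\<bar>) * H2"
      using mu H2p by (simp add: mult_left_mono mult_right_mono)
    also have "\<mu> * (nh * \<bar>t - t0\<bar>) * H2 = E * \<bar>t - t0\<bar>"
      unfolding E_def nh2[symmetric] by (simp add: power2_eq_square power3_eq_cube)
    finally show "QF a b c d (v1+t*h1) (v2+t*h2) h1 h2 / sqrt (S t) ^ 3 \<ge> E * \<bar>t - t0\<bar>"
      unfolding R_def by simp
  qed
  define D where "D t = QF a b c d (v1+t*h1) (v2+t*h2) h1 h2 / sqrt (S t) ^ 3" for t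
  have dpoly: "((\<lambda>t. E*(t-t0)^2/2) has_real_derivative E*(t-t0)) (at t)" for t
    by (rule derivative_eq_intros refl)+ (simp_all add: eval_nat_numeral field_simps)
  have contf: "continuous_on A f" for A unfolding f_def by (rule phi_cont)
  have contp: "continuous_on A (\<lambda>t. E*(t-t0)^2/2)" for A by (intro continuous_intros) auto
  have inc1: "f x + E*(x-t0)^2/2 \<le> f y + E*(y-t0)^2/2" if "x \<le> y" "y \<le> t0" for x y
  proof (rule mono_piece[where f="\<lambda>t. f t + E*(t-t0)^2/2" and f'="\<lambda>t. D t + E*(t-t0)"])
    show "x \<le> y" by fact
    show "continuous_on {x..y} (\<lambda>t. f t + E * (t - t0)^2/2)" by (intro continuous_on_add contf contp)
    fix t assume "x < t" "t < y"
    hence tt: "t \<noteq> t0" using that by simp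
    show "((\<lambda>t. f t + E*(t-t0)^2/2) has_real_derivative D t + E*(t-t0)) (at t) \<and> D t + E*(t-t0) \<ge> 0"
    proof
      show "((\<lambda>t. f t + E*(t-t0)^2/2) has_real_derivative D t + E*(t-t0)) (at t)"
        using DERIV_add[OF conjunct1[OF dphi[OF tt]] dpoly[of t]] unfolding D_def .
      have "D t \<ge> E * \<bar>t - t0\<bar>" using conjunct2[OF dphi[OF tt]] unfolding D_def .
      moreover have "\<bar>t - t0\<bar> = -(t-t0)" using \<open>t < y\<close> that by simp
      ultimately show "D t + E*(t-t0) \<ge> 0" by (simp add: algebra_simps)
    qed
  qed
  have inc2: "f x - E*(x-t0)^2/2 \<le> f y - E*(y-t0)^2/2" if "x \<le> y" "t0 \<le> x" for x y
  proof (rule mono_piece[where f="\<lambda>t. f t - E*(t-t0)^2/2" and f'="\<lambda>t. D t - E*(t-t0)"])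
    show "x \<le> y" by fact
    show "continuous_on {x..y} (\<lambda>t. f t - E * (t - t0)^2/2)" by (intro continuous_on_diff contf contp)
    fix t assume "x < t" "t < y"
    hence tt: "t \<noteq> t0" using that by simp
    show "((\<lambda>t. f t - E*(t-t0)^2/2) has_real_derivative D t - E*(t-t0)) (at t) \<and> D t - E*(t-t0) \<ge> 0"
    proof
      show "((\<lambda>t. f t - E*(t-t0)^2/2) has_real_derivative D t - E*(t-t0)) (at t)"
        using DERIV_diff[OF conjunct1[OF dphi[OF tt]] dpoly[of t]] unfolding D_def .
      have "D t \<ge> E * \<bar>t - t0\<bar>" using conjunct2[OF dphi[OF tt]] unfolding D_def .
      moreover have "\<bar>t - t0\<bar> = t-t0" using \<open>x < t\<close> that by simp
      ultimately show "D t - E*(t-t0) \<ge> 0" by simp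
    qed
  qed
  have main: "f 1 - f 0 \<ge> E * ((1-t0)^2/2 + t0^2/2 - (max 0 (min 1 t0) - t0)^2)"
  proof (cases "t0 < 0")
    case True
    have "max 0 (min 1 t0) = 0" using True by simp
    thus ?thesis using inc2[of 0 1] True by (simp add: algebra_simps)
  next
    case f1: False
    show ?thesis
    proof (cases "t0 > 1")
      case True
      have "max 0 (min 1 t0) = 1" using True by simp
      thus ?thesis using inc1[of 0 1] True by (simp add: algebra_simps)
    next
      case False
      have "max 0 (min 1 t0) = t0" using f1 False by simp
      thus ?thesis using inc1[of 0 t0] inc2[of t0 1] f1 False by (simp add: algebra_simps)
    qed
  qed
  have brk: "(1-t0)^2/2 + t0^2/2 - (max 0 (min 1 t0) - t0)^2 \<ge> 1/4"
  proof (cases "t0 < 0")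
    case True
    thus ?thesis by (simp add: power2_eq_square algebra_simps)
  next
    case f1: False
    show ?thesis
    proof (cases "t0 > 1")
      case True thus ?thesis by (simp add: power2_eq_square field_simps)
    next
      case False
      have "max 0 (min 1 t0) = t0" using f1 False by simp
      moreover have "(1-t0)^2/2 + t0^2/2 \<ge> 1/4"
      proof -
        have "(1-t0)^2/2 + t0^2/2 - 1/4 = (2*t0-1)^2/4" by (simp add: power2_eq_square field_simps)
        thus ?thesis using zero_le_power2[of "2*t0-1"] by linarith
      qed
      ultimately show ?thesis by simp
    qed
  qed
  have "E * (1/4) \<le> E * ((1-t0)^2/2 + t0^2/2 - (max 0 (min 1 t0) - t0)^2)"
    using E0 brk by (rule mult_left_mono[rotated])
  hence "f 1 - f 0 \<ge> E/4" using main by simp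
  thus ?thesis unfolding f_def E_def nh_def H2_def by simp
qed

lemma norm2_eq: "norm (x::real^2) = sqrt ((x$1)^2 + (x$2)^2)"
  by (simp add: norm_vec_def L2_set_def sum_2)

lemma inner2_eq: "(x::real^2) \<bullet> y = x$1*y$1 + x$2*y$2"
  by (simp add: inner_vec_def sum_2)

lemma unit_vec:
  assumes "w1^2+w2^2 = (1::real)"
  shows "norm (vector[w1,w2]::real^2) = 1" "norm1 a b (vector[w1,w2]) = sqrt(a*w1^2+b*w2^2)"
    "norm2 c d (vector[w1,w2]) = sqrt(c*w1^2+d*w2^2)"
  using assms by (simp_all add: norm2_eq norm1_def norm2_def)

lemma Gdot: "G_B a b c d x \<bullet> h = PP a b c d (x$1) (x$2) (h$1) (h$2) / sqrt ((x$1)^2 + (x$2)^2)"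
proof (cases "x = 0")
  case True thus ?thesis by (simp add: G_B_def PP_def)
next
  case False
  thus ?thesis unfolding G_B_def inner2_eq PP_def norm2_eq[symmetric]
    by (simp add: field_simps)
qed

lemma link: "(G_B a b c d u - G_B a b c d v) \<bullet> (u - v)
   = phi a b c d (v$1) (v$2) (u$1-v$1) (u$2-v$2) 1 - phi a b c d (v$1) (v$2) (u$1-v$1) (u$2-v$2) 0"
  by (simp add: inner_diff_left Gdot phi_def)

lemma AA_pos: assumes "a>0" "b>0" "w1^2+w2^2 = 1" shows "AA a b w1 w2 > 0"
proof (cases "w1 = 0")
  case True thus ?thesis using assms by (simp add: AA_def)
next
  case False
  have "w2^2*(a*w1^2+b*w2^2) \<ge> 0" using assms by simp
  moreover have "2*a*w1^2 > 0" using assms False by simp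
  ultimately show ?thesis unfolding AA_def by linarith
qed

lemma BB_pos: assumes "c>0" "d>0" "w1^2+w2^2 = 1" shows "BB c d w1 w2 > 0"
proof (cases "w2 = 0")
  case True thus ?thesis using assms by (simp add: BB_def)
next
  case False
  have "w1^2*(c*w1^2+d*w2^2) \<ge> 0" using assms by simp
  moreover have "2*d*w2^2 > 0" using assms False by simp
  ultimately show ?thesis unfolding BB_def by linarith
qed

lemma scale_QF:
  assumes S: "x1^2+x2^2 > 0"
  shows "\<exists>w1 w2. w1^2+w2^2 = 1 \<and> QF a b c d x1 x2 h1 h2 = (x1^2+x2^2)^2 * QF a b c d w1 w2 h1 h2"
proof -
  define r where "r = sqrt (x1^2+x2^2)"
  have r0: "r > 0" unfolding r_def using S by simp
  have r2: "r^2 = x1^2+x2^2" unfolding r_def using S by simp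
  define w1 where "w1 = x1/r"
  define w2 where "w2 = x2/r"
  have x: "x1 = r*w1" "x2 = r*w2" unfolding w1_def w2_def using r0 by auto
  have "w1^2+w2^2 = (x1^2+x2^2)/r^2" unfolding w1_def w2_def by (simp add: power_divide add_divide_distrib)
  also have "(x1^2+x2^2)/r^2 = 1" unfolding r2[symmetric] using r0 by simp
  finally have w: "w1^2+w2^2 = 1" .
  have "QF a b c d x1 x2 h1 h2 = r^4 * QF a b c d w1 w2 h1 h2" unfolding x by (rule QF_hom)
  also have "r^4 = (x1^2+x2^2)^2" unfolding r2[symmetric] by simp
  finally show ?thesis using w by blast
qed

lemma QF_nonneg:
  assumes pos: "a>0" "b>0" "c>0" "d>0"
    and cond: "\<And>w1 w2. w1^2+w2^2 = 1 \<Longrightarrow>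
      (b + c - (sqrt(a*w1^2+b*w2^2) + sqrt(c*w1^2+d*w2^2))^2/2)^2 \<le> 4*a*d
          \<or> (b + c - (sqrt(a*w1^2+b*w2^2) - sqrt(c*w1^2+d*w2^2))^2/2)^2 \<le> 4*a*d"
    and S: "x1^2+x2^2 > 0"
  shows "QF a b c d x1 x2 h1 h2 \<ge> 0*(x1^2+x2^2)^2*(h1^2+h2^2)"
proof -
  obtain w1 w2 where w: "w1^2+w2^2 = 1" and q: "QF a b c d x1 x2 h1 h2 = (x1^2+x2^2)^2 * QF a b c d w1 w2 h1 h2"
    using scale_QF[OF S] by blast
  note cr = core[OF pos w cond[OF w]]
  define M where "M = 2 * sqrt a * sqrt d + sqrt(a*w1^2+b*w2^2) * sqrt(c*w1^2+d*w2^2)"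
  define K where "K = b+c-((a*w1^2+b*w2^2)+(c*w1^2+d*w2^2))/2"
  have "\<bar>K\<bar> \<le> M" using cr(2) unfolding M_def K_def .
  hence "K^2 \<le> M^2" by (metis abs_le_square_iff abs_of_nonneg abs_ge_zero order_trans)
  hence "w1^2*w2^2*(M^2 - K^2) \<ge> 0" by simp
  hence "AA a b w1 w2 * BB c d w1 w2 - (KK a b c d w1 w2)^2 \<ge> 0"
    using cr(1) unfolding M_def[symmetric] K_def[symmetric] by linarith
  hence "QF a b c d w1 w2 h1 h2 \<ge> 0"
    unfolding QF_unit[OF w] using quad_nonneg AA_pos[OF pos(1,2) w] by blast
  thus ?thesis unfolding q by simp
qed

lemma core_strict_abs:
  fixes a b c d w1 w2 :: real
  assumes pos: "a>0" "b>0" "c>0" "d>0"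
  and cond: "(b + c - (sqrt(a*w1^2+b*w2^2) + sqrt(c*w1^2+d*w2^2))^2/2)^2 < 4*a*d
          \<or> (b + c - (sqrt(a*w1^2+b*w2^2) - sqrt(c*w1^2+d*w2^2))^2/2)^2 < 4*a*d"
  shows "\<bar>b+c-((a*w1^2+b*w2^2)+(c*w1^2+d*w2^2))/2\<bar> < 2 * sqrt a * sqrt d + sqrt(a*w1^2+b*w2^2) * sqrt(c*w1^2+d*w2^2)"
proof -
  define X where "X = sqrt(a*w1^2+b*w2^2)"
  define Y where "Y = sqrt(c*w1^2+d*w2^2)"
  define p where "p = sqrt a"
  define q where "q = sqrt d"
  define K where "K = b+c-((a*w1^2+b*w2^2)+(c*w1^2+d*w2^2))/2"
  have X2: "X^2 = a*w1^2+b*w2^2" unfolding X_def using pos by (simp add: add_nonneg_nonneg)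
  have Y2: "Y^2 = c*w1^2+d*w2^2" unfolding Y_def using pos by (simp add: add_nonneg_nonneg)
  have p2: "p^2 = a" "p \<ge> 0" unfolding p_def using pos by auto
  have q2: "q^2 = d" "q \<ge> 0" unfolding q_def using pos by auto
  have XY: "X*Y \<ge> 0" unfolding X_def Y_def using pos by (simp add: add_nonneg_nonneg)
  have ad: "4*a*d = (2*p*q)^2" using p2 q2 by (simp add: power_mult_distrib)
  have KX: "K = b + c - (X^2+Y^2)/2" unfolding K_def X2 Y2 ..
  have e1: "b + c - (X+Y)^2/2 = K - X*Y" unfolding KX by (simp add: power2_eq_square field_simps)
  have e2: "b + c - (X-Y)^2/2 = K + X*Y" unfolding KX by (simp add: power2_eq_square field_simps)
  have c1: "(K - X*Y)^2 < (2*p*q)^2 \<or> (K + X*Y)^2 < (2*p*q)^2"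
    using cond unfolding ad X_def[symmetric] Y_def[symmetric] e1 e2 .
  have pq: "2*p*q \<ge> 0" using p2 q2 by simp
  have absK: "\<bar>K\<bar> < 2*p*q + X*Y"
    using c1 proof
    assume "(K - X*Y)^2 < (2*p*q)^2"
    hence "\<bar>K - X*Y\<bar> < 2*p*q" using power2_less_imp_less[of "\<bar>K - X*Y\<bar>" "2*p*q"] pq by simp
    thus ?thesis using XY by linarith
  next
    assume "(K + X*Y)^2 < (2*p*q)^2"
    hence "\<bar>K + X*Y\<bar> < 2*p*q" using power2_less_imp_less[of "\<bar>K + X*Y\<bar>" "2*p*q"] pq by simp
    thus ?thesis using XY by linarith
  qed
  show ?thesis using absK unfolding K_def X_def Y_def p_def q_def .
qed

lemma D_pos:
  assumes pos: "a>0" "b>0" "c>0" "d>0" and w: "w1^2+w2^2 = 1"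
  and cond: "(b + c - (sqrt(a*w1^2+b*w2^2) + sqrt(c*w1^2+d*w2^2))^2/2)^2 < 4*a*d
          \<or> (b + c - (sqrt(a*w1^2+b*w2^2) - sqrt(c*w1^2+d*w2^2))^2/2)^2 < 4*a*d"
  shows "AA a b w1 w2 * BB c d w1 w2 - (KK a b c d w1 w2)^2 > 0"
proof (cases "w1 = 0 \<or> w2 = 0")
  case True
  hence "KK a b c d w1 w2 = 0" unfolding KK_def by auto
  thus ?thesis using AA_pos[OF pos(1,2) w] BB_pos[OF pos(3,4) w] by simp
next
  case False
  have condle: "(b + c - (sqrt(a*w1^2+b*w2^2) + sqrt(c*w1^2+d*w2^2))^2/2)^2 \<le> 4*a*d
          \<or> (b + c - (sqrt(a*w1^2+b*w2^2) - sqrt(c*w1^2+d*w2^2))^2/2)^2 \<le> 4*a*d"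
    using cond by linarith
  note cr = core[OF pos w condle]
  define M where "M = 2 * sqrt a * sqrt d + sqrt(a*w1^2+b*w2^2) * sqrt(c*w1^2+d*w2^2)"
  define K where "K = b+c-((a*w1^2+b*w2^2)+(c*w1^2+d*w2^2))/2"
  have "\<bar>K\<bar> < M" using core_strict_abs[OF pos cond] unfolding M_def K_def .
  hence "K^2 < M^2" by (metis abs_ge_zero abs_less_iff abs_of_nonneg less_trans_Suc power2_abs power_strict_mono zero_less_numeral order_le_less_trans abs_ge_zero pos2)
  moreover have "w1^2*w2^2 > 0" using False by simp
  ultimately have "w1^2*w2^2*(M^2 - K^2) > 0" by simp
  thus ?thesis using cr(1) unfolding M_def[symmetric] K_def[symmetric] by linarith
qed

lemma QF_strict:
  assumes pos: "a>0" "b>0" "c>0" "d>0"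
    and cond: "\<And>w1 w2. w1^2+w2^2 = 1 \<Longrightarrow>
      (b + c - (sqrt(a*w1^2+b*w2^2) + sqrt(c*w1^2+d*w2^2))^2/2)^2 < 4*a*d
          \<or> (b + c - (sqrt(a*w1^2+b*w2^2) - sqrt(c*w1^2+d*w2^2))^2/2)^2 < 4*a*d"
  shows "\<exists>\<mu>>0. \<forall>x1 x2 h1 h2. x1^2+x2^2 > 0 \<longrightarrow> QF a b c d x1 x2 h1 h2 \<ge> \<mu>*(x1^2+x2^2)^2*(h1^2+h2^2)"
proof -
  define N where "N w1 w2 = AA a b w1 w2 * BB c d w1 w2 - (KK a b c d w1 w2)^2" for w1 w2
  define T where "T w1 w2 = AA a b w1 w2 + BB c d w1 w2" for w1 w2
  define g where "g \<theta> = N (cos \<theta>) (sin \<theta>) / T (cos \<theta>) (sin \<theta>)" for \<theta>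
  have Tpos: "T w1 w2 > 0" if "w1^2+w2^2 = 1" for w1 w2
    unfolding T_def using AA_pos[OF pos(1,2) that] BB_pos[OF pos(3,4) that] by simp
  have Npos: "N w1 w2 > 0" if "w1^2+w2^2 = 1" for w1 w2
    unfolding N_def using D_pos[OF pos that cond[OF that]] .
  have contN: "continuous_on {0..2*pi} (\<lambda>\<theta>. N (cos \<theta>) (sin \<theta>))"
    unfolding N_def AA_def BB_def KK_def by (intro continuous_intros) auto
  have contT: "continuous_on {0..2*pi} (\<lambda>\<theta>. T (cos \<theta>) (sin \<theta>))"
    unfolding T_def AA_def BB_def by (intro continuous_intros)
  have contg: "continuous_on {0..2*pi} g"
    unfolding g_def
    by (rule continuous_on_divide[OF contN contT]) (intro ballI, metis Tpos sin_cos_squared_add2 less_irrefl)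
  obtain \<theta>0 where th0: "\<theta>0 \<in> {0..2*pi}" and mn: "\<forall>y\<in>{0..2*pi}. g \<theta>0 \<le> g y"
    using continuous_attains_inf[OF compact_Icc _ contg] by auto
  define \<mu> where "\<mu> = g \<theta>0"
  have mupos: "\<mu> > 0" unfolding \<mu>_def g_def
    using Npos[of "cos \<theta>0" "sin \<theta>0"] Tpos[of "cos \<theta>0" "sin \<theta>0"] by simp
  have unit: "QF a b c d w1 w2 h1 h2 \<ge> \<mu> * (h1^2+h2^2)" if w: "w1^2+w2^2 = 1" for w1 w2 h1 h2
  proof -
    obtain \<theta> where th: "0 \<le> \<theta>" "\<theta> \<le> 2*pi" "w1 = cos \<theta>" "w2 = sin \<theta>"
      using sincos_total_2pi_le[OF w] by blast
    have "\<mu> \<le> g \<theta>" unfolding \<mu>_def using mn th by auto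
    hence "\<mu> \<le> N w1 w2 / T w1 w2" unfolding g_def th(3,4) .
    hence Nge: "N w1 w2 \<ge> \<mu> * T w1 w2" using Tpos[OF w] by (simp add: pos_le_divide_eq)
    have "T w1 w2 * QF a b c d w1 w2 h1 h2 = N w1 w2 * (h1^2+h2^2)
        + (AA a b w1 w2*h1+KK a b c d w1 w2*h2)^2 + (KK a b c d w1 w2*h1+BB c d w1 w2*h2)^2"
      unfolding QF_unit[OF w] T_def N_def by (rule quad_sos)
    also have "\<dots> \<ge> N w1 w2 * (h1^2+h2^2)" by simp
    also have "N w1 w2 * (h1^2+h2^2) \<ge> (\<mu> * T w1 w2) * (h1^2+h2^2)"
      using Nge by (simp add: mult_right_mono)
    finally have "T w1 w2 * (\<mu> * (h1^2+h2^2)) \<le> T w1 w2 * QF a b c d w1 w2 h1 h2" by (simp add: mult_ac)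
    thus ?thesis using Tpos[OF w] by simp
  qed
  have "QF a b c d x1 x2 h1 h2 \<ge> \<mu>*(x1^2+x2^2)^2*(h1^2+h2^2)" if S: "x1^2+x2^2 > 0" for x1 x2 h1 h2
  proof -
    obtain w1 w2 where w: "w1^2+w2^2 = 1" and q: "QF a b c d x1 x2 h1 h2 = (x1^2+x2^2)^2 * QF a b c d w1 w2 h1 h2"
      using scale_QF[OF S] by blast
    have "(x1^2+x2^2)^2 * (\<mu> * (h1^2+h2^2)) \<le> (x1^2+x2^2)^2 * QF a b c d w1 w2 h1 h2"
      using unit[OF w] by (simp add: mult_left_mono)
    thus ?thesis unfolding q by (simp add: mult_ac)
  qed
  thus ?thesis using mupos by blast
qed

lemma powr3: "(x::real) \<ge> 0 \<Longrightarrow> x powr 3 = x^3"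
  by (cases "x = 0") (simp_all add: powr_numeral)

lemma final_ineq:
  assumes mu: "\<mu> \<ge> 0"
    and H: "\<And>x1 x2 k1 k2. x1^2+x2^2 > 0 \<Longrightarrow> QF a b c d x1 x2 k1 k2 \<ge> \<mu>*(x1^2+x2^2)^2*(k1^2+k2^2)"
  shows "(G_B a b c d u - G_B a b c d v) \<bullet> (u - v) \<ge> \<mu>/4 * norm (u - v) ^ 3"
proof -
  have "norm (u - v) = sqrt ((u$1-v$1)^2 + (u$2-v$2)^2)" by (simp add: norm2_eq)
  thus ?thesis unfolding link using path_ineq[OF mu H, of "u$1-v$1" "u$2-v$2" "v$1" "v$2"] by simp
qed

theorem mainTheorem4:
  fixes a b c d :: real
  assumes "a > 0" "b > 0" "c > 0" "d > 0"
  shows "(((\<forall>w::real^2. norm w = 1 \<longrightarrow>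
              (b + c - (norm1 a b w + norm2 c d w)^2 / 2)^2 \<le> 4 * a * d)
          \<or> (\<forall>w::real^2. norm w = 1 \<longrightarrow>
              (b + c - (norm1 a b w - norm2 c d w)^2 / 2)^2 \<le> 4 * a * d))
         \<longrightarrow> monotone_map (G_B a b c d))
       \<and> (((\<forall>w::real^2. norm w = 1 \<longrightarrow>
              (b + c - (norm1 a b w + norm2 c d w)^2 / 2)^2 < 4 * a * d)
          \<or> (\<forall>w::real^2. norm w = 1 \<longrightarrow>
              (b + c - (norm1 a b w - norm2 c d w)^2 / 2)^2 < 4 * a * d))
         \<longrightarrow> alpha_monotone 3 (G_B a b c d))"
proof (intro conjI impI)
  assume hyp: "(\<forall>w::real^2. norm w = 1 \<longrightarrow>
              (b + c - (norm1 a b w + norm2 c d w)^2 / 2)^2 \<le> 4 * a * d)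
          \<or> (\<forall>w::real^2. norm w = 1 \<longrightarrow>
              (b + c - (norm1 a b w - norm2 c d w)^2 / 2)^2 \<le> 4 * a * d)"
  have cond: "(b + c - (sqrt(a*w1^2+b*w2^2) + sqrt(c*w1^2+d*w2^2))^2/2)^2 \<le> 4*a*d
          \<or> (b + c - (sqrt(a*w1^2+b*w2^2) - sqrt(c*w1^2+d*w2^2))^2/2)^2 \<le> 4*a*d"
    if w: "w1^2+w2^2 = 1" for w1 w2
    using hyp unit_vec(1)[OF w] unit_vec(2)[OF w, of a b] unit_vec(3)[OF w, of c d] by metis
  have H: "QF a b c d x1 x2 k1 k2 \<ge> 0*(x1^2+x2^2)^2*(k1^2+k2^2)" if "x1^2+x2^2 > 0" for x1 x2 k1 k2
    by (rule QF_nonneg[OF assms cond that])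
  show "monotone_map (G_B a b c d)"
    unfolding monotone_map_def using final_ineq[of 0, OF _ H] by simp
next
  assume hyp: "(\<forall>w::real^2. norm w = 1 \<longrightarrow>
              (b + c - (norm1 a b w + norm2 c d w)^2 / 2)^2 < 4 * a * d)
          \<or> (\<forall>w::real^2. norm w = 1 \<longrightarrow>
              (b + c - (norm1 a b w - norm2 c d w)^2 / 2)^2 < 4 * a * d)"
  have cond: "(b + c - (sqrt(a*w1^2+b*w2^2) + sqrt(c*w1^2+d*w2^2))^2/2)^2 < 4*a*d
          \<or> (b + c - (sqrt(a*w1^2+b*w2^2) - sqrt(c*w1^2+d*w2^2))^2/2)^2 < 4*a*d"
    if w: "w1^2+w2^2 = 1" for w1 w2
    using hyp unit_vec(1)[OF w] unit_vec(2)[OF w, of a b] unit_vec(3)[OF w, of c d] by metis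
  obtain \<mu> where mu: "\<mu> > 0" and H: "\<forall>x1 x2 h1 h2. x1^2+x2^2 > 0 \<longrightarrow> QF a b c d x1 x2 h1 h2 \<ge> \<mu>*(x1^2+x2^2)^2*(h1^2+h2^2)"
    using QF_strict[OF assms cond] by blast
  show "alpha_monotone 3 (G_B a b c d)"
    unfolding alpha_monotone_def
  proof (intro exI[of _ "\<mu>/4"] conjI allI)
    show "\<mu>/4 > 0" using mu by simp
    fix u v :: "real^2"
    show "\<mu>/4 * norm (u - v) powr 3 \<le> (G_B a b c d u - G_B a b c d v) \<bullet> (u - v)"
      using final_ineq[of \<mu>, OF _ H[rule_format]] mu by (simp add: powr3)
  qed
qed

end
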